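(* The maximal value of $\ell$ on $G(e,e,n)$ is $n(n-1)$. An element $w\in G(e,e,n)$ satisfies $\ell(w)=n(n-1)$ if and only if $w$ is a diagonal matrix with $w[i,i]\neq 1$ for all $2\le i\le n$; such an element has the reduced expression $(t_{k_2}t_0)(s_3t_{k_3}t_0s_3)\cdots(s_n\cdots s_3t_{k_n}t_0s_3\cdots s_n)$ where $w[i,i]=\zeta_e^{k_i}$, $1\le k_i\le e-1$. There are exactly $(e-1)^{n-1}$ elements of maximal length.
   Context: Let $e\ge 2$, $n\ge 2$, $\zeta_e=e^{2\pi i/e}$. $G(e,e,n)$ is the group of $n\times n$ monomial matrices with nonzero entries $e$-th roots of unity whose product is $1$; $w[i,c]$ is the $(i,c)$ entry. For $i\in\mathbb{Z}/e\mathbb{Z}$, $t_i$ is the matrix with $(1,2)$ entry $\zeta_e^{-i}$, $(2,1)$ entry $\zeta_e^{i}$, $(j,j)$ entry $1$ for $3\le j\le n$, other entries $0$; for $3\le j\le n$, $s_j$ is the permutation matrix of the transposition $(j-1\ j)$. $X=\{t_0,\dots,t_{e-1},s_3,\dots,s_n\}$ and $\ell$ is the word length with respect to $X$. *)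

theory Defs
  imports Complex_Main "Jordan_Normal_Form.Matrix"
begin

text \<open>Matrices are n x n complex matrices of Jordan_Normal_Form (0-indexed internally).
  The paper's entry w[i,c] (1-indexed) is entry w i c.\<close>

definition entry :: "complex mat \<Rightarrow> nat \<Rightarrow> nat \<Rightarrow> complex" where
  "entry w i c = w $$ (i - 1, c - 1)"

definition zeta :: "nat \<Rightarrow> complex" where
  "zeta e = cis (2 * pi / real e)"

definition monomial_mat :: "nat \<Rightarrow> complex mat \<Rightarrow> bool" where
  "monomial_mat n A \<longleftrightarrow> A \<in> carrier_mat n n
     \<and> (\<forall>i<n. \<exists>!j. j < n \<and> A $$ (i, j) \<noteq> 0)
     \<and> (\<forall>j<n. \<exists>!i. i < n \<and> A $$ (i, j) \<noteq> 0)"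

definition Geen :: "nat \<Rightarrow> nat \<Rightarrow> complex mat set" where
  "Geen e n = {A. monomial_mat n A
     \<and> (\<forall>i<n. \<forall>j<n. A $$ (i, j) \<noteq> 0 \<longrightarrow> A $$ (i, j) ^ e = 1)
     \<and> (\<Prod>i<n. \<Prod>j<n. if A $$ (i, j) \<noteq> 0 then A $$ (i, j) else 1) = 1}"

definition tgen :: "nat \<Rightarrow> nat \<Rightarrow> nat \<Rightarrow> complex mat" where
  "tgen e n i = mat n n (\<lambda>(a, b).
     if a = 0 \<and> b = 1 then inverse (zeta e ^ i)
     else if a = 1 \<and> b = 0 then zeta e ^ i
     else if a = b \<and> a \<ge> 2 then 1 else 0)"

text \<open>s_j (3 <= j <= n): permutation matrix of the transposition (j-1 j), 1-indexed.\<close>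
definition sgen :: "nat \<Rightarrow> nat \<Rightarrow> complex mat" where
  "sgen n j = mat n n (\<lambda>(a, b).
     if b = Transposition.transpose (j - 2) (j - 1) a then 1 else 0)"

definition gens :: "nat \<Rightarrow> nat \<Rightarrow> complex mat set" where
  "gens e n = {tgen e n i | i. i < e} \<union> {sgen n j | j. 3 \<le> j \<and> j \<le> n}"

definition word_prod :: "nat \<Rightarrow> complex mat list \<Rightarrow> complex mat" where
  "word_prod n ws = foldr (*) ws (1\<^sub>m n)"

definition wlen :: "nat \<Rightarrow> nat \<Rightarrow> complex mat \<Rightarrow> nat" where
  "wlen e n w = (LEAST k. \<exists>ws. set ws \<subseteq> gens e n \<and> length ws = k \<and> word_prod n ws = w)"

definition diagonal :: "nat \<Rightarrow> complex mat \<Rightarrow> bool" where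
  "diagonal n w \<longleftrightarrow> (\<forall>i<n. \<forall>j<n. i \<noteq> j \<longrightarrow> w $$ (i, j) = 0)"

text \<open>The word (t_{k_2} t_0)(s_3 t_{k_3} t_0 s_3)...(s_n...s_3 t_{k_n} t_0 s_3...s_n).\<close>
definition block :: "nat \<Rightarrow> nat \<Rightarrow> (nat \<Rightarrow> nat) \<Rightarrow> nat \<Rightarrow> complex mat list" where
  "block e n k i = map (sgen n) (rev [3..<i+1]) @ [tgen e n (k i), tgen e n 0]
                    @ map (sgen n) [3..<i+1]"

definition max_word :: "nat \<Rightarrow> nat \<Rightarrow> (nat \<Rightarrow> nat) \<Rightarrow> complex mat list" where
  "max_word e n k = concat (map (block e n k) [2..<n+1])"

end

theory Submission imports Defs begin

definition mmat :: "nat \<Rightarrow> (nat \<Rightarrow> nat) \<Rightarrow> (nat \<Rightarrow> complex) \<Rightarrow> complex mat" where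
  "mmat n \<sigma> a = mat n n (\<lambda>(i, j). if j = \<sigma> i then a i else 0)"

definition goodrep :: "nat \<Rightarrow> nat \<Rightarrow> (nat \<Rightarrow> nat) \<Rightarrow> (nat \<Rightarrow> complex) \<Rightarrow> bool" where
  "goodrep e n \<sigma> a \<longleftrightarrow> (\<forall>i<n. \<sigma> i < n) \<and> inj_on \<sigma> {..<n} \<and> (\<forall>i<n. a i ^ e = 1)
     \<and> (\<Prod>i<n. a i) = 1"

lemma mmat_carrier[simp]: "mmat n \<sigma> a \<in> carrier_mat n n"
  by (simp add: mmat_def)

lemma mmat_index[simp]: "i < n \<Longrightarrow> j < n \<Longrightarrow> mmat n \<sigma> a $$ (i, j) = (if j = \<sigma> i then a i else 0)"
  by (simp add: mmat_def)

lemma mmat_dims[simp]: "dim_row (mmat n \<sigma> a) = n" "dim_col (mmat n \<sigma> a) = n"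
  by (simp_all add: mmat_def)

lemma mmat_cong: "(\<And>i. i < n \<Longrightarrow> \<sigma> i = \<sigma>' i \<and> a i = a' i) \<Longrightarrow> mmat n \<sigma> a = mmat n \<sigma>' a'"
  by (rule eq_matI) auto

lemma mmat_mult:
  assumes "\<forall>i<n. \<sigma> i < n"
  shows "mmat n \<sigma> a * mmat n \<pi> b = mmat n (\<pi> \<circ> \<sigma>) (\<lambda>i. a i * b (\<sigma> i))"
proof (rule eq_matI)
  fix i j assume ij: "i < dim_row (mmat n (\<pi> \<circ> \<sigma>) (\<lambda>i. a i * b (\<sigma> i)))"
     "j < dim_col (mmat n (\<pi> \<circ> \<sigma>) (\<lambda>i. a i * b (\<sigma> i)))"
  hence i: "i < n" and j: "j < n" by auto
  have "(mmat n \<sigma> a * mmat n \<pi> b) $$ (i, j) = (\<Sum>k = 0..<n. (if k = \<sigma> i then a i else 0) * (if j = \<pi> k then b k else 0))"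
    using i j by (simp add: index_mult_mat scalar_prod_def)
  also have "\<dots> = (\<Sum>k = 0..<n. (if k = \<sigma> i then a i * (if j = \<pi> k then b k else 0) else 0))"
    by (rule sum.cong) auto
  also have "\<dots> = a i * (if j = \<pi> (\<sigma> i) then b (\<sigma> i) else 0)"
    using assms i by (simp add: sum.delta')
  finally show "(mmat n \<sigma> a * mmat n \<pi> b) $$ (i, j) = mmat n (\<pi> \<circ> \<sigma>) (\<lambda>i. a i * b (\<sigma> i)) $$ (i, j)"
    using i j by simp
qed auto

lemma one_mmat: "1\<^sub>m n = mmat n id (\<lambda>_. 1)"
  by (rule eq_matI) auto

lemma mmat_inj:
  assumes "mmat n \<sigma> a = mmat n \<sigma>' a'" "\<forall>i<n. \<sigma> i < n" "\<forall>i<n. a i \<noteq> 0" "i < n"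
  shows "\<sigma> i = \<sigma>' i \<and> a i = a' i"
proof -
  have s: "\<sigma> i < n" "a i \<noteq> 0" using assms by auto
  have "mmat n \<sigma> a $$ (i, \<sigma> i) = mmat n \<sigma>' a' $$ (i, \<sigma> i)" using assms(1) by simp
  hence "a i = (if \<sigma> i = \<sigma>' i then a' i else 0)" using s assms(4) by simp
  thus ?thesis using s by (auto split: if_splits)
qed

lemma goodrep_nz: "goodrep e n \<sigma> a \<Longrightarrow> e > 0 \<Longrightarrow> i < n \<Longrightarrow> a i \<noteq> 0"
  unfolding goodrep_def by (metis zero_neq_one zero_power)

lemma goodrep_surj: "goodrep e n \<sigma> a \<Longrightarrow> \<sigma> ` {..<n} = {..<n}"
  unfolding goodrep_def
  by (intro card_subset_eq) (auto simp: card_image)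

lemma goodrep_ex: "goodrep e n \<sigma> a \<Longrightarrow> c < n \<Longrightarrow> \<exists>u<n. \<sigma> u = c"
  using goodrep_surj[of e n \<sigma> a] by (metis imageE lessThan_iff)

lemma prod_delta1: fixes s n :: nat shows "s < n \<Longrightarrow> (\<Prod>j<n. if j = s then c else 1) = (c::complex)"
  by (simp add: prod.delta)

lemma prod_delta_mono:
  fixes a :: complex and s n :: nat
  assumes "s < n"
  shows "(\<Prod>j<n. if (if j = s then a else 0) \<noteq> 0 then (if j = s then a else 0) else 1) = (if a \<noteq> 0 then a else 1)"
proof -
  have "(\<Prod>j<n. if (if j = s then a else 0) \<noteq> 0 then (if j = s then a else 0) else 1) = (\<Prod>j<n. if j = s then (if a \<noteq> 0 then a else 1) else 1)"
    by (rule prod.cong) auto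
  also have "\<dots> = (if a \<noteq> 0 then a else 1)" by (rule prod_delta1[OF assms])
  finally show ?thesis .
qed

lemma rep_G:
  assumes "goodrep e n \<sigma> a" "e > 0"
  shows "mmat n \<sigma> a \<in> Geen e n"
proof -
  have s: "\<forall>i<n. \<sigma> i < n" and inj: "inj_on \<sigma> {..<n}" and r: "\<forall>i<n. a i ^ e = 1"
    and p: "(\<Prod>i<n. a i) = 1" using assms(1) unfolding goodrep_def by auto
  have nz: "\<And>i. i < n \<Longrightarrow> a i \<noteq> 0" using goodrep_nz assms by blast
  have mm: "monomial_mat n (mmat n \<sigma> a)"
    unfolding monomial_mat_def
  proof (intro conjI allI impI)
    fix i assume i: "i < n"
    show "\<exists>!j. j < n \<and> mmat n \<sigma> a $$ (i, j) \<noteq> 0"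
      using i s nz by (intro ex1I[of _ "\<sigma> i"]) (auto split: if_splits)
  next
    fix j assume j: "j < n"
    obtain u where u: "u < n" "\<sigma> u = j" using goodrep_ex[OF assms(1) j] by blast
    show "\<exists>!i. i < n \<and> mmat n \<sigma> a $$ (i, j) \<noteq> 0"
    proof (intro ex1I[of _ u])
      show "u < n \<and> mmat n \<sigma> a $$ (u, j) \<noteq> 0" using u nz j by auto
    next
      fix y assume "y < n \<and> mmat n \<sigma> a $$ (y, j) \<noteq> 0"
      hence "y < n" "\<sigma> y = j" using j by (auto split: if_splits)
      thus "y = u" using u inj by (auto simp: inj_on_def)
    qed
  qed simp
  have "(\<Prod>i<n. \<Prod>j<n. if mmat n \<sigma> a $$ (i, j) \<noteq> 0 then mmat n \<sigma> a $$ (i, j) else 1) = (\<Prod>i<n. a i)"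
  proof (rule prod.cong[OF refl])
    fix i assume "i \<in> {..<n}"
    hence i: "i < n" by simp
    have "(\<Prod>j<n. if mmat n \<sigma> a $$ (i, j) \<noteq> 0 then mmat n \<sigma> a $$ (i, j) else 1)
       = (\<Prod>j<n. if (if j = \<sigma> i then a i else 0) \<noteq> 0 then (if j = \<sigma> i then a i else 0) else 1)"
      using i by (intro prod.cong) auto
    also have "\<dots> = a i" using prod_delta_mono[of "\<sigma> i" n "a i"] s i nz by auto
    finally show "(\<Prod>j<n. if mmat n \<sigma> a $$ (i, j) \<noteq> 0 then mmat n \<sigma> a $$ (i, j) else 1) = a i" .
  qed
  hence pr: "(\<Prod>i<n. \<Prod>j<n. if mmat n \<sigma> a $$ (i, j) \<noteq> 0 then mmat n \<sigma> a $$ (i, j) else 1) = 1"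
    using p by simp
  have rr: "\<forall>i<n. \<forall>j<n. mmat n \<sigma> a $$ (i, j) \<noteq> 0 \<longrightarrow> mmat n \<sigma> a $$ (i, j) ^ e = 1"
    using r by simp
  show ?thesis unfolding Geen_def mem_Collect_eq by (intro conjI mm rr pr)
qed

lemma G_rep:
  assumes "w \<in> Geen e n"
  shows "\<exists>\<sigma> a. goodrep e n \<sigma> a \<and> w = mmat n \<sigma> a"
proof -
  have mm: "monomial_mat n w" and r: "\<forall>i<n. \<forall>j<n. w $$ (i, j) \<noteq> 0 \<longrightarrow> w $$ (i, j) ^ e = 1"
    and p: "(\<Prod>i<n. \<Prod>j<n. if w $$ (i, j) \<noteq> 0 then w $$ (i, j) else 1) = 1"
    using assms unfolding Geen_def by auto
  have car: "w \<in> carrier_mat n n" and rows: "\<forall>i<n. \<exists>!j. j < n \<and> w $$ (i, j) \<noteq> 0"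
    and cols: "\<forall>j<n. \<exists>!i. i < n \<and> w $$ (i, j) \<noteq> 0" using mm unfolding monomial_mat_def by auto
  define \<sigma> where "\<sigma> i = (THE j. j < n \<and> w $$ (i, j) \<noteq> 0)" for i
  define a where "a i = w $$ (i, \<sigma> i)" for i
  have ex: "\<exists>!j. j < n \<and> w $$ (i, j) \<noteq> 0" if "i < n" for i
    using rows that by blast
  have sp: "\<sigma> i < n \<and> w $$ (i, \<sigma> i) \<noteq> 0" if i: "i < n" for i
    unfolding \<sigma>_def by (rule theI'[OF ex[OF i]])
  have su: "j = \<sigma> i" if "i < n" "j < n" "w $$ (i, j) \<noteq> 0" for i j
    unfolding \<sigma>_def using the1_equality[OF ex[OF that(1)]] that by simp
  have weq: "w = mmat n \<sigma> a"
  proof (rule eq_matI)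
    fix i j assume "i < dim_row (mmat n \<sigma> a)" "j < dim_col (mmat n \<sigma> a)"
    hence ij: "i < n" "j < n" by auto
    show "w $$ (i, j) = mmat n \<sigma> a $$ (i, j)"
      using ij su[OF ij] by (auto simp: a_def)
  qed (use car in auto)
  have inj: "inj_on \<sigma> {..<n}"
  proof (rule inj_onI)
    fix x y assume xy: "x \<in> {..<n}" "y \<in> {..<n}" "\<sigma> x = \<sigma> y"
    have x: "x < n" "y < n" using xy by auto
    have e1: "\<exists>!i. i < n \<and> w $$ (i, \<sigma> x) \<noteq> 0" using cols sp x by blast
    have "x < n \<and> w $$ (x, \<sigma> x) \<noteq> 0" "y < n \<and> w $$ (y, \<sigma> x) \<noteq> 0"
      using sp x xy(3) by metis+
    thus "x = y" using e1 by blast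
  qed
  have pp: "(\<Prod>i<n. a i) = 1"
  proof -
    have "(\<Prod>i<n. \<Prod>j<n. if w $$ (i, j) \<noteq> 0 then w $$ (i, j) else 1) = (\<Prod>i<n. a i)"
    proof (rule prod.cong[OF refl])
      fix i assume "i \<in> {..<n}"
      hence i: "i < n" by simp
      have "(\<Prod>j<n. if w $$ (i, j) \<noteq> 0 then w $$ (i, j) else 1)
         = (\<Prod>j<n. if (if j = \<sigma> i then a i else 0) \<noteq> 0 then (if j = \<sigma> i then a i else 0) else 1)"
        using i weq by (intro prod.cong) auto
      also have "\<dots> = a i" using prod_delta_mono[of "\<sigma> i" n "a i"] sp i by (auto simp: a_def)
      finally show "(\<Prod>j<n. if w $$ (i, j) \<noteq> 0 then w $$ (i, j) else 1) = a i" .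
    qed
    thus ?thesis using p by simp
  qed
  have "goodrep e n \<sigma> a" unfolding goodrep_def using sp inj pp r by (auto simp: a_def)
  thus ?thesis using weq by blast
qed

lemma zeta_pow: "zeta e ^ k = cis (2 * pi * real k / real e)"
  by (simp add: zeta_def DeMoivre ac_simps)

lemma zeta_nz0[simp]: "zeta e \<noteq> 0"
  by (simp add: zeta_def)

lemma zeta_nz[simp]: "zeta e ^ k \<noteq> 0"
  by simp

lemma zeta_root: "e > 0 \<Longrightarrow> (zeta e ^ k) ^ e = 1"
proof -
  assume "e > 0"
  have "(zeta e ^ k) ^ e = (zeta e ^ e) ^ k" by (simp add: power_mult[symmetric] mult.commute)
  also have "zeta e ^ e = cis (2 * pi)" using \<open>e > 0\<close> by (simp add: zeta_pow)
  also have "\<dots> = 1" by (simp add: complex_eq_iff)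
  finally show ?thesis by simp
qed

lemma zeta_onto: "e > 0 \<Longrightarrow> z ^ e = 1 \<Longrightarrow> \<exists>k<e. zeta e ^ k = z"
proof -
  assume e: "e > 0" and z: "z ^ e = 1"
  have "z \<in> (\<lambda>k. cis (2 * pi * real k / real e)) ` {..<e}"
    using bij_betw_roots_unity[OF e] z unfolding bij_betw_def by auto
  thus ?thesis by (auto simp: zeta_pow)
qed

lemma zeta_inj: "k < e \<Longrightarrow> l < e \<Longrightarrow> zeta e ^ k = zeta e ^ l \<Longrightarrow> k = l"
proof -
  assume kl: "k < e" "l < e" "zeta e ^ k = zeta e ^ l"
  hence e: "e > 0" by simp
  show "k = l" using bij_betw_roots_unity[OF e] kl unfolding bij_betw_def inj_on_def zeta_pow by auto
qed

definition tb :: "nat \<Rightarrow> nat \<Rightarrow> nat \<Rightarrow> complex" where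
  "tb e k r = (if r = 0 then inverse (zeta e ^ k) else if r = 1 then zeta e ^ k else 1)"

lemma tgen_mmat: "tgen e n k = mmat n (Transposition.transpose 0 1) (tb e k)"
  by (rule eq_matI) (auto simp: tgen_def tb_def transpose_def)

lemma sgen_mmat: "sgen n j = mmat n (Transposition.transpose (j - 2) (j - 1)) (\<lambda>_. 1)"
  by (rule eq_matI) (auto simp: sgen_def)

lemma tb_prod: "n \<ge> 2 \<Longrightarrow> (\<Prod>i<n. tb e k i) = 1"
proof -
  assume n: "n \<ge> 2"
  have "(\<Prod>i<n. tb e k i) = (\<Prod>i<n. (if i = 0 then inverse (zeta e ^ k) else 1) * (if i = 1 then zeta e ^ k else 1))"
    by (rule prod.cong) (auto simp: tb_def)
  also have "\<dots> = inverse (zeta e ^ k) * zeta e ^ k"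
    using n by (simp add: prod.distrib prod.delta)
  also have "\<dots> = 1" by (rule left_inverse) simp
  finally show ?thesis .
qed

lemma goodrep_tgen: "e > 0 \<Longrightarrow> n \<ge> 2 \<Longrightarrow> goodrep e n (Transposition.transpose 0 1) (tb e k)"
  unfolding goodrep_def
proof (intro conjI)
  assume "e > 0" "n \<ge> 2"
  show "(\<Prod>i<n. tb e k i) = 1" using tb_prod[OF \<open>n \<ge> 2\<close>] .
  show "\<forall>i<n. tb e k i ^ e = 1" using \<open>e > 0\<close> by (auto simp: tb_def zeta_root power_inverse)
  show "\<forall>i<n. Transposition.transpose 0 1 i < n" using \<open>n \<ge> 2\<close> by (auto simp: transpose_def)
  show "inj_on (Transposition.transpose 0 1) {..<n}" by (auto simp: inj_on_def transpose_def)
qed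

lemma goodrep_sgen: "3 \<le> j \<Longrightarrow> j \<le> n \<Longrightarrow> goodrep e n (Transposition.transpose (j - 2) (j - 1)) (\<lambda>_. 1)"
  unfolding goodrep_def
  by (auto simp: transpose_def inj_on_def)

lemma goodrep_mult:
  assumes "goodrep e n \<sigma> a" "goodrep e n \<pi> b"
  shows "goodrep e n (\<pi> \<circ> \<sigma>) (\<lambda>i. a i * b (\<sigma> i))"
proof -
  have s: "\<forall>i<n. \<sigma> i < n" "inj_on \<sigma> {..<n}" "\<forall>i<n. a i ^ e = 1" "(\<Prod>i<n. a i) = 1"
    using assms(1) unfolding goodrep_def by auto
  have p: "\<forall>i<n. \<pi> i < n" "inj_on \<pi> {..<n}" "\<forall>i<n. b i ^ e = 1" "(\<Prod>i<n. b i) = 1"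
    using assms(2) unfolding goodrep_def by auto
  have sur: "\<sigma> ` {..<n} = {..<n}" using goodrep_surj[OF assms(1)] .
  have "(\<Prod>i<n. b (\<sigma> i)) = (\<Prod>i\<in>\<sigma> ` {..<n}. b i)"
    using s(2) by (simp add: prod.reindex)
  also have "\<dots> = 1" using sur p(4) by simp
  finally have pb: "(\<Prod>i<n. b (\<sigma> i)) = 1" .
  have inj: "inj_on (\<pi> \<circ> \<sigma>) {..<n}"
    using s(2) p(2) sur by (intro comp_inj_on) auto
  show ?thesis unfolding goodrep_def
  proof (intro conjI)
    show "\<forall>i<n. (\<pi> \<circ> \<sigma>) i < n" using s(1) p(1) by simp
    show "\<forall>i<n. (a i * b (\<sigma> i)) ^ e = 1" using s(1,3) p(3) by (simp add: power_mult_distrib)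
    show "(\<Prod>i<n. a i * b (\<sigma> i)) = 1" using s(4) pb by (simp add: prod.distrib)
  qed (rule inj)
qed

definition Pairs :: "nat \<Rightarrow> (nat \<times> nat) set" where
  "Pairs n = {(j, i). j < i \<and> i < n}"

definition Hc :: "(nat \<Rightarrow> nat) \<Rightarrow> (nat \<Rightarrow> complex) \<Rightarrow> nat \<times> nat \<Rightarrow> nat" where
  "Hc \<sigma> a p = (if \<sigma> (fst p) < \<sigma> (snd p) then (if a (snd p) \<noteq> 1 then 2 else 0) else 1)"

definition Fp :: "nat \<Rightarrow> (nat \<Rightarrow> nat) \<Rightarrow> (nat \<Rightarrow> complex) \<Rightarrow> nat" where
  "Fp n \<sigma> a = sum (Hc \<sigma> a) (Pairs n)"

lemma finite_Pairs[simp]: "finite (Pairs n)"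
proof -
  have "Pairs n \<subseteq> {..<n} \<times> {..<n}" by (auto simp: Pairs_def)
  thus ?thesis by (rule finite_subset) auto
qed

lemma Fp_cong: "(\<And>i. i < n \<Longrightarrow> \<sigma> i = \<sigma>' i \<and> a i = a' i) \<Longrightarrow> Fp n \<sigma> a = Fp n \<sigma>' a'"
  unfolding Fp_def by (rule sum.cong) (auto simp: Pairs_def Hc_def)

lemma tr_less:
  assumes "x \<noteq> y" "\<not> (x = c \<and> y = Suc c)" "\<not> (x = Suc c \<and> y = c)"
  shows "(Transposition.transpose c (Suc c) x < Transposition.transpose c (Suc c) y) = (x < y)"
  using assms by (auto simp: transpose_def)

lemma swap_change:
  assumes inj: "inj_on \<sigma> {..<n}" and uv: "u < n" "v < n" "\<sigma> u = c" "\<sigma> v = Suc c"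
    and ad: "\<forall>i<n. a' i \<noteq> a i \<longrightarrow> (i = u \<or> i = v) \<and> c = 0"
  shows "Fp n (Transposition.transpose c (Suc c) \<circ> \<sigma>) a' + Hc \<sigma> a (min u v, max u v)
       = Fp n \<sigma> a + Hc (Transposition.transpose c (Suc c) \<circ> \<sigma>) a' (min u v, max u v)"
proof -
  define \<tau> where "\<tau> = Transposition.transpose c (Suc c)"
  define p0 where "p0 = (min u v, max u v)"
  have uv': "u \<noteq> v" using uv by auto
  have p0: "p0 \<in> Pairs n" using uv uv' by (auto simp: p0_def Pairs_def min_def max_def)
  have eq: "Hc (\<tau> \<circ> \<sigma>) a' p = Hc \<sigma> a p" if p: "p \<in> Pairs n - {p0}" for p
  proof -
    obtain j i where ji: "p = (j, i)" by (cases p)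
    have ji2: "j < i" "i < n" "p \<noteq> p0" using p ji by (auto simp: Pairs_def)
    have ne: "\<sigma> j \<noteq> \<sigma> i" using inj ji2 by (auto simp: inj_on_def)
    have n1: "\<not> (\<sigma> j = c \<and> \<sigma> i = Suc c)"
    proof
      assume "\<sigma> j = c \<and> \<sigma> i = Suc c"
      hence "j = u" "i = v" using inj uv ji2 by (auto simp: inj_on_def)
      thus False using ji2 ji by (auto simp: p0_def)
    qed
    have n2: "\<not> (\<sigma> j = Suc c \<and> \<sigma> i = c)"
    proof
      assume "\<sigma> j = Suc c \<and> \<sigma> i = c"
      hence "j = v" "i = u" using inj uv ji2 by (auto simp: inj_on_def)
      thus False using ji2 ji by (auto simp: p0_def)
    qed
    have o: "(\<tau> (\<sigma> j) < \<tau> (\<sigma> i)) = (\<sigma> j < \<sigma> i)"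
      unfolding \<tau>_def using tr_less[OF ne n1 n2] .
    have a: "\<sigma> j < \<sigma> i \<Longrightarrow> a' i = a i"
    proof (rule ccontr)
      assume l: "\<sigma> j < \<sigma> i" and "a' i \<noteq> a i"
      hence "(i = u \<or> i = v) \<and> c = 0" using ad ji2 by auto
      hence "\<sigma> j = c \<and> \<sigma> i = Suc c" using l uv by auto
      thus False using n1 by simp
    qed
    show ?thesis using o a ji by (auto simp: Hc_def)
  qed
  have "Fp n (\<tau> \<circ> \<sigma>) a' = Hc (\<tau> \<circ> \<sigma>) a' p0 + sum (Hc (\<tau> \<circ> \<sigma>) a') (Pairs n - {p0})"
    unfolding Fp_def using p0 by (simp add: sum.remove)
  moreover have "Fp n \<sigma> a = Hc \<sigma> a p0 + sum (Hc \<sigma> a) (Pairs n - {p0})"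
    unfolding Fp_def using p0 by (simp add: sum.remove)
  moreover have "sum (Hc (\<tau> \<circ> \<sigma>) a') (Pairs n - {p0}) = sum (Hc \<sigma> a) (Pairs n - {p0})"
    using eq by (rule sum.cong[OF refl])
  ultimately show ?thesis unfolding \<tau>_def p0_def by simp
qed

lemma mmat_invol:
  assumes "\<forall>x<n. \<pi> (\<pi> x) = x \<and> b x * b (\<pi> x) = 1" "\<forall>i<n. \<sigma> i < n" "\<forall>i<n. \<pi> i < n"
  shows "mmat n (\<pi> \<circ> \<sigma>) (\<lambda>i. a i * b (\<sigma> i)) * mmat n \<pi> b = mmat n \<sigma> a"
proof -
  have "mmat n (\<pi> \<circ> \<sigma>) (\<lambda>i. a i * b (\<sigma> i)) * mmat n \<pi> b
      = mmat n (\<pi> \<circ> (\<pi> \<circ> \<sigma>)) (\<lambda>i. a i * b (\<sigma> i) * b ((\<pi> \<circ> \<sigma>) i))"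
    using assms(2,3) by (intro mmat_mult) simp
  also have "\<dots> = mmat n \<sigma> a"
  proof (rule mmat_cong)
    fix i assume i: "i < n"
    have "b (\<sigma> i) * b (\<pi> (\<sigma> i)) = 1" using assms(1,2) i by blast
    hence "a i * b (\<sigma> i) * b (\<pi> (\<sigma> i)) = a i" by (simp add: mult.assoc)
    thus "(\<pi> \<circ> (\<pi> \<circ> \<sigma>)) i = \<sigma> i \<and> a i * b (\<sigma> i) * b ((\<pi> \<circ> \<sigma>) i) = a i"
      using assms(1,2) i by simp
  qed
  finally show ?thesis .
qed

lemma step_t:
  assumes g: "goodrep e n \<sigma> a" and e: "e > 0" and n: "n \<ge> 2"
    and uv: "u < n" "v < n" "\<sigma> u = 0" "\<sigma> v = 1"
  shows "mmat n \<sigma> a * tgen e n k = mmat n (Transposition.transpose 0 1 \<circ> \<sigma>) (\<lambda>i. a i * tb e k (\<sigma> i))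
    \<and> goodrep e n (Transposition.transpose 0 1 \<circ> \<sigma>) (\<lambda>i. a i * tb e k (\<sigma> i))
    \<and> mmat n (Transposition.transpose 0 1 \<circ> \<sigma>) (\<lambda>i. a i * tb e k (\<sigma> i)) * tgen e n k = mmat n \<sigma> a
    \<and> (u < v \<longrightarrow> Fp n (Transposition.transpose 0 1 \<circ> \<sigma>) (\<lambda>i. a i * tb e k (\<sigma> i)) + (if a v \<noteq> 1 then 2 else 0) = Fp n \<sigma> a + 1)
    \<and> (v < u \<longrightarrow> Fp n (Transposition.transpose 0 1 \<circ> \<sigma>) (\<lambda>i. a i * tb e k (\<sigma> i)) + 1 = Fp n \<sigma> a + (if a u * inverse (zeta e ^ k) \<noteq> 1 then 2 else 0))"
proof -
  define \<sigma>' where "\<sigma>' = Transposition.transpose 0 1 \<circ> \<sigma>"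
  define a' where "a' = (\<lambda>i. a i * tb e k (\<sigma> i))"
  have s: "\<forall>i<n. \<sigma> i < n" and inj: "inj_on \<sigma> {..<n}" using g unfolding goodrep_def by auto
  have m1: "mmat n \<sigma> a * tgen e n k = mmat n \<sigma>' a'"
    unfolding tgen_mmat \<sigma>'_def a'_def using s by (rule mmat_mult)
  have g2: "goodrep e n \<sigma>' a'"
    unfolding \<sigma>'_def a'_def by (rule goodrep_mult[OF g goodrep_tgen[OF e n]])
  have m2: "mmat n \<sigma>' a' * tgen e n k = mmat n \<sigma> a"
    unfolding tgen_mmat \<sigma>'_def a'_def
  proof (rule mmat_invol)
    show "\<forall>x<n. Transposition.transpose 0 1 (Transposition.transpose 0 1 x) = x \<and> tb e k x * tb e k (Transposition.transpose 0 1 x) = 1"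
      by (auto simp: transpose_def tb_def)
    show "\<forall>i<n. \<sigma> i < n" by (rule s)
    show "\<forall>i<n. Transposition.transpose 0 1 i < n" using n by (auto simp: transpose_def)
  qed
  have ad: "\<forall>i<n. a' i \<noteq> a i \<longrightarrow> (i = u \<or> i = v) \<and> (0::nat) = 0"
  proof (intro allI impI)
    fix i assume i: "i < n" and ne: "a' i \<noteq> a i"
    hence "\<sigma> i = 0 \<or> \<sigma> i = 1" unfolding a'_def tb_def by (auto split: if_splits)
    thus "(i = u \<or> i = v) \<and> (0::nat) = 0" using inj uv i unfolding inj_on_def by auto
  qed
  have sc: "Fp n \<sigma>' a' + Hc \<sigma> a (min u v, max u v) = Fp n \<sigma> a + Hc \<sigma>' a' (min u v, max u v)"
    using swap_change[OF inj uv(1,2), of 0 a' a] uv(3,4) ad unfolding \<sigma>'_def by simp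
  have c1: "u < v \<longrightarrow> Fp n \<sigma>' a' + (if a v \<noteq> 1 then 2 else 0) = Fp n \<sigma> a + 1"
  proof
    assume l: "u < v"
    have "Hc \<sigma> a (min u v, max u v) = (if a v \<noteq> 1 then 2 else 0)"
      using l uv by (simp add: Hc_def min_def max_def)
    moreover have "Hc \<sigma>' a' (min u v, max u v) = 1"
      using l uv by (simp add: Hc_def min_def max_def \<sigma>'_def)
    ultimately show "Fp n \<sigma>' a' + (if a v \<noteq> 1 then 2 else 0) = Fp n \<sigma> a + 1" using sc by simp
  qed
  have c2: "v < u \<longrightarrow> Fp n \<sigma>' a' + 1 = Fp n \<sigma> a + (if a u * inverse (zeta e ^ k) \<noteq> 1 then 2 else 0)"
  proof
    assume l: "v < u"
    have "Hc \<sigma> a (min u v, max u v) = 1"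
      using l uv by (simp add: Hc_def min_def max_def)
    moreover have "Hc \<sigma>' a' (min u v, max u v) = (if a u * inverse (zeta e ^ k) \<noteq> 1 then 2 else 0)"
      using l uv by (simp add: Hc_def min_def max_def \<sigma>'_def a'_def tb_def)
    ultimately show "Fp n \<sigma>' a' + 1 = Fp n \<sigma> a + (if a u * inverse (zeta e ^ k) \<noteq> 1 then 2 else 0)" using sc by simp
  qed
  show ?thesis using m1 g2 m2 c1 c2 unfolding \<sigma>'_def a'_def by blast
qed

lemma sgen_mmat2: "sgen n (c + 2) = mmat n (Transposition.transpose c (Suc c)) (\<lambda>_. 1)"
  unfolding sgen_mmat by simp

lemma step_s:
  assumes g: "goodrep e n \<sigma> a" and c: "1 \<le> c" "Suc c < n"
    and uv: "u < n" "v < n" "\<sigma> u = c" "\<sigma> v = Suc c"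
  shows "mmat n \<sigma> a * sgen n (c + 2) = mmat n (Transposition.transpose c (Suc c) \<circ> \<sigma>) a
    \<and> goodrep e n (Transposition.transpose c (Suc c) \<circ> \<sigma>) a
    \<and> mmat n (Transposition.transpose c (Suc c) \<circ> \<sigma>) a * sgen n (c + 2) = mmat n \<sigma> a
    \<and> (u < v \<longrightarrow> Fp n (Transposition.transpose c (Suc c) \<circ> \<sigma>) a + (if a v \<noteq> 1 then 2 else 0) = Fp n \<sigma> a + 1)
    \<and> (v < u \<longrightarrow> Fp n (Transposition.transpose c (Suc c) \<circ> \<sigma>) a + 1 = Fp n \<sigma> a + (if a u \<noteq> 1 then 2 else 0))"
proof -
  define \<sigma>' where "\<sigma>' = Transposition.transpose c (Suc c) \<circ> \<sigma>"
  have s: "\<forall>i<n. \<sigma> i < n" and inj: "inj_on \<sigma> {..<n}" using g unfolding goodrep_def by auto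
  have m1: "mmat n \<sigma> a * sgen n (c + 2) = mmat n \<sigma>' a"
  proof -
    have "mmat n \<sigma> a * sgen n (c + 2) = mmat n \<sigma>' (\<lambda>i. a i * 1)"
      unfolding sgen_mmat2 \<sigma>'_def using s by (rule mmat_mult)
    thus ?thesis by simp
  qed
  have g2: "goodrep e n \<sigma>' a"
    using goodrep_mult[OF g goodrep_sgen[of "c + 2" n e]] c unfolding \<sigma>'_def by simp
  have m2: "mmat n \<sigma>' a * sgen n (c + 2) = mmat n \<sigma> a"
  proof -
    have "mmat n \<sigma>' (\<lambda>i. a i * 1) * mmat n (Transposition.transpose c (Suc c)) (\<lambda>_. 1) = mmat n \<sigma> a"
      unfolding \<sigma>'_def
    proof (rule mmat_invol)
      show "\<forall>x<n. Transposition.transpose c (Suc c) (Transposition.transpose c (Suc c) x) = x \<and> (1::complex) * 1 = 1"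
        by (auto simp: transpose_def)
      show "\<forall>i<n. \<sigma> i < n" by (rule s)
      show "\<forall>i<n. Transposition.transpose c (Suc c) i < n" using c by (auto simp: transpose_def)
    qed
    thus ?thesis unfolding sgen_mmat2 by simp
  qed
  have ad: "\<forall>i<n. a i \<noteq> a i \<longrightarrow> (i = u \<or> i = v) \<and> c = 0" by simp
  have sc: "Fp n \<sigma>' a + Hc \<sigma> a (min u v, max u v) = Fp n \<sigma> a + Hc \<sigma>' a (min u v, max u v)"
    using swap_change[OF inj uv ad] unfolding \<sigma>'_def .
  have c1: "u < v \<longrightarrow> Fp n \<sigma>' a + (if a v \<noteq> 1 then 2 else 0) = Fp n \<sigma> a + 1"
  proof
    assume l: "u < v"
    have "Hc \<sigma> a (min u v, max u v) = (if a v \<noteq> 1 then 2 else 0)"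
      using l uv by (simp add: Hc_def min_def max_def)
    moreover have "Hc \<sigma>' a (min u v, max u v) = 1"
      using l uv by (simp add: Hc_def min_def max_def \<sigma>'_def)
    ultimately show "Fp n \<sigma>' a + (if a v \<noteq> 1 then 2 else 0) = Fp n \<sigma> a + 1" using sc by simp
  qed
  have c2: "v < u \<longrightarrow> Fp n \<sigma>' a + 1 = Fp n \<sigma> a + (if a u \<noteq> 1 then 2 else 0)"
  proof
    assume l: "v < u"
    have "Hc \<sigma> a (min u v, max u v) = 1"
      using l uv by (simp add: Hc_def min_def max_def)
    moreover have "Hc \<sigma>' a (min u v, max u v) = (if a u \<noteq> 1 then 2 else 0)"
      using l uv by (simp add: Hc_def min_def max_def \<sigma>'_def)
    ultimately show "Fp n \<sigma>' a + 1 = Fp n \<sigma> a + (if a u \<noteq> 1 then 2 else 0)" using sc by simp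
  qed
  show ?thesis using m1 g2 m2 c1 c2 unfolding \<sigma>'_def by blast
qed

lemma gens_cases:
  assumes "g \<in> gens e n"
  obtains k where "k < e" "g = tgen e n k" | j where "3 \<le> j" "j \<le> n" "g = sgen n j"
  using assms unfolding gens_def by blast

lemma gens_carrier: "g \<in> gens e n \<Longrightarrow> g \<in> carrier_mat n n"
  by (erule gens_cases) (simp_all add: tgen_mmat sgen_mmat)

lemma gen_step:
  assumes g: "goodrep e n \<sigma> a" and e: "e > 0" and n: "n \<ge> 2" and x: "x \<in> gens e n"
  shows "\<exists>\<sigma>' a'. goodrep e n \<sigma>' a' \<and> mmat n \<sigma> a * x = mmat n \<sigma>' a' \<and> Fp n \<sigma>' a' \<le> Fp n \<sigma> a + 1"
  using x
proof (cases rule: gens_cases)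
  case (1 k)
  obtain u where u: "u < n" "\<sigma> u = 0" using goodrep_ex[OF g, of 0] n by auto
  obtain v where v: "v < n" "\<sigma> v = 1" using goodrep_ex[OF g, of 1] n by auto
  have "u \<noteq> v" using u v by auto
  hence "u < v \<or> v < u" by arith
  moreover note st = step_t[OF g e n u(1) v(1) u(2) v(2), of k]
  ultimately have le: "Fp n (Transposition.transpose 0 1 \<circ> \<sigma>) (\<lambda>i. a i * tb e k (\<sigma> i)) \<le> Fp n \<sigma> a + 1"
    by (auto split: if_splits)
  show ?thesis using st le 1(2) by blast
next
  case (2 j)
  define c where "c = j - 2"
  have c: "1 \<le> c" "Suc c < n" "j = c + 2" using 2 by (auto simp: c_def)
  obtain u where u: "u < n" "\<sigma> u = c" using goodrep_ex[OF g, of c] c by auto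
  obtain v where v: "v < n" "\<sigma> v = Suc c" using goodrep_ex[OF g, of "Suc c"] c by auto
  have "u \<noteq> v" using u v by auto
  hence "u < v \<or> v < u" by arith
  moreover note st = step_s[OF g c(1,2) u(1) v(1) u(2) v(2)]
  ultimately have le: "Fp n (Transposition.transpose c (Suc c) \<circ> \<sigma>) a \<le> Fp n \<sigma> a + 1"
    by (auto split: if_splits)
  show ?thesis using st le 2(3) c(3) by blast
qed

lemma wp_carrier: "set ws \<subseteq> carrier_mat n n \<Longrightarrow> word_prod n ws \<in> carrier_mat n n"
  by (induction ws) (auto simp: word_prod_def)

lemma wp_append:
  "set xs \<subseteq> carrier_mat n n \<Longrightarrow> set ys \<subseteq> carrier_mat n n \<Longrightarrow>
   word_prod n (xs @ ys) = word_prod n xs * word_prod n ys"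
proof (induction xs)
  case Nil
  thus ?case using wp_carrier[of ys n] by (simp add: word_prod_def)
next
  case (Cons x xs)
  have x: "x \<in> carrier_mat n n" and xs: "set xs \<subseteq> carrier_mat n n" using Cons.prems by auto
  have "word_prod n ((x # xs) @ ys) = x * word_prod n (xs @ ys)" by (simp add: word_prod_def)
  also have "\<dots> = x * (word_prod n xs * word_prod n ys)" using Cons.IH[OF xs Cons.prems(2)] by simp
  also have "\<dots> = (x * word_prod n xs) * word_prod n ys"
    using x wp_carrier[OF xs] wp_carrier[OF Cons.prems(2)] by (simp add: assoc_mult_mat)
  also have "x * word_prod n xs = word_prod n (x # xs)" by (simp add: word_prod_def)
  finally show ?case .
qed

lemma wp_snoc:
  "set ws \<subseteq> carrier_mat n n \<Longrightarrow> x \<in> carrier_mat n n \<Longrightarrow> word_prod n (ws @ [x]) = word_prod n ws * x"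
  using wp_append[of ws n "[x]"] by (simp add: word_prod_def)

lemma Fp_one: "Fp n id (\<lambda>_. 1) = 0"
  unfolding Fp_def by (rule sum.neutral) (auto simp: Hc_def Pairs_def)

lemma goodrep_one: "goodrep e n id (\<lambda>_. 1)"
  unfolding goodrep_def by auto

lemma lower:
  assumes e: "e > 0" and n: "n \<ge> 2"
  shows "set ws \<subseteq> gens e n \<Longrightarrow> \<exists>\<sigma> a. goodrep e n \<sigma> a \<and> word_prod n ws = mmat n \<sigma> a \<and> Fp n \<sigma> a \<le> length ws"
proof (induction ws rule: rev_induct)
  case Nil
  have "word_prod n [] = mmat n id (\<lambda>_. 1)" by (simp add: word_prod_def one_mmat)
  thus ?case using goodrep_one[of e n] Fp_one[of n] by fastforce
next
  case (snoc x ws)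
  obtain \<sigma> a where sa: "goodrep e n \<sigma> a" "word_prod n ws = mmat n \<sigma> a" "Fp n \<sigma> a \<le> length ws"
    using snoc by auto
  have x: "x \<in> gens e n" using snoc.prems by auto
  obtain \<sigma>' a' where sa': "goodrep e n \<sigma>' a'" "mmat n \<sigma> a * x = mmat n \<sigma>' a'" "Fp n \<sigma>' a' \<le> Fp n \<sigma> a + 1"
    using gen_step[OF sa(1) e n x] by blast
  have "word_prod n (ws @ [x]) = word_prod n ws * x"
    using snoc.prems gens_carrier by (intro wp_snoc) auto
  hence "word_prod n (ws @ [x]) = mmat n \<sigma>' a'" using sa sa' by simp
  moreover have "Fp n \<sigma>' a' \<le> length (ws @ [x])" using sa sa' by simp
  ultimately show ?case using sa'(1) by blast
qed

lemma incr_id: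
  assumes s: "\<forall>i<n. \<sigma> i < (n::nat)" and m: "\<forall>j i. j < i \<longrightarrow> i < n \<longrightarrow> \<sigma> j < \<sigma> i" and i: "i < n"
  shows "\<sigma> i = i"
proof -
  have inj: "inj_on \<sigma> {..<n}"
  proof (rule inj_onI)
    fix x y assume "x \<in> {..<n}" "y \<in> {..<n}" "\<sigma> x = \<sigma> y"
    thus "x = y" using m by (metis lessThan_iff less_irrefl linorder_neqE_nat)
  qed
  have "card {..<i} \<le> card {..<\<sigma> i}"
  proof (rule card_inj_on_le)
    show "inj_on \<sigma> {..<i}" by (rule inj_on_subset[OF inj]) (use i in auto)
    show "\<sigma> ` {..<i} \<subseteq> {..<\<sigma> i}" using m i by auto
  qed auto
  hence le1: "i \<le> \<sigma> i" by simp
  have "card {i<..<n} \<le> card {\<sigma> i<..<n}"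
  proof (rule card_inj_on_le)
    show "inj_on \<sigma> {i<..<n}" by (rule inj_on_subset[OF inj]) auto
    show "\<sigma> ` {i<..<n} \<subseteq> {\<sigma> i<..<n}" using m s by auto
  qed auto
  hence "n - Suc i \<le> n - Suc (\<sigma> i)" by simp
  hence "\<sigma> i \<le> i" using s i by auto
  thus ?thesis using le1 by simp
qed

lemma Fp0:
  assumes g: "goodrep e n \<sigma> a" and n: "n \<ge> 1" and f: "Fp n \<sigma> a = 0"
  shows "mmat n \<sigma> a = 1\<^sub>m n"
proof -
  have s: "\<forall>i<n. \<sigma> i < n" and p: "(\<Prod>i<n. a i) = 1" using g unfolding goodrep_def by auto
  have h: "Hc \<sigma> a p = 0" if "p \<in> Pairs n" for p
    using f that unfolding Fp_def by (simp add: sum_eq_0_iff)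
  have h2: "\<sigma> j < \<sigma> i \<and> a i = 1" if "j < i" "i < n" for i j
    using h[of "(j, i)"] that by (auto simp: Pairs_def Hc_def split: if_splits)
  have sid: "\<sigma> i = i" if "i < n" for i using incr_id[OF s _ that] h2 by blast
  have a1: "a i = 1" if "1 \<le> i" "i < n" for i using h2[of 0 i] that by auto
  obtain m where m: "n = Suc m" using n by (cases n) auto
  have "(\<Prod>i<n. a i) = a 0 * (\<Prod>i<m. a (Suc i))" unfolding m by (rule prod.lessThan_Suc_shift)
  also have "(\<Prod>i<m. a (Suc i)) = 1" using a1 m by (intro prod.neutral) auto
  finally have a0: "a 0 = 1" using p by simp
  have "mmat n \<sigma> a = mmat n id (\<lambda>_. 1)"
  proof (rule mmat_cong)
    fix i assume i: "i < n"
    show "\<sigma> i = id i \<and> a i = 1" using sid[OF i] a1[OF _ i] a0 by (cases i) auto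
  qed
  thus ?thesis by (simp add: one_mmat)
qed

lemma descent:
  assumes g: "goodrep e n \<sigma> a" and e: "e > 0" and n: "n \<ge> 2" and f: "Fp n \<sigma> a > 0"
  shows "\<exists>x \<sigma>' a'. x \<in> gens e n \<and> goodrep e n \<sigma>' a' \<and> mmat n \<sigma>' a' * x = mmat n \<sigma> a \<and> Fp n \<sigma>' a' < Fp n \<sigma> a"
proof (rule ccontr)
  assume nd: "\<not> ?thesis"
  have s: "\<forall>i<n. \<sigma> i < n" and inj: "inj_on \<sigma> {..<n}" and r: "\<forall>i<n. a i ^ e = 1"
    using g unfolding goodrep_def by auto
  have P: "\<forall>u v. u < n \<longrightarrow> v < n \<longrightarrow> \<sigma> u = m \<longrightarrow> \<sigma> v = Suc m \<longrightarrow> u < v \<and> a v = 1" if "Suc m < n" for m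
    using that
  proof (induction m)
    case 0
    show ?case
    proof (intro allI impI)
      fix u v assume uv: "u < n" "v < n" "\<sigma> u = 0" "\<sigma> v = Suc 0"
      have ne: "u \<noteq> v" using uv by auto
      have uv1: "\<sigma> v = 1" using uv by simp
      have "\<not> v < u"
      proof
        assume vu: "v < u"
        obtain k where k: "k < e" "zeta e ^ k = a u" using zeta_onto[OF e] r uv by blast
        have "a u * inverse (zeta e ^ k) = 1" using k(2) g e uv goodrep_nz by auto
        hence "Fp n (Transposition.transpose 0 1 \<circ> \<sigma>) (\<lambda>i. a i * tb e k (\<sigma> i)) < Fp n \<sigma> a"
          using step_t[OF g e n uv(1,2,3) uv1, of k] vu by simp
        moreover have "tgen e n k \<in> gens e n" using k unfolding gens_def by blast
        ultimately show False using nd step_t[OF g e n uv(1,2,3) uv1, of k] by blast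
      qed
      hence uv2: "u < v" using ne by arith
      have "a v = 1"
      proof (rule ccontr)
        assume "a v \<noteq> 1"
        hence "Fp n (Transposition.transpose 0 1 \<circ> \<sigma>) (\<lambda>i. a i * tb e 0 (\<sigma> i)) < Fp n \<sigma> a"
          using step_t[OF g e n uv(1,2,3) uv1, of 0] uv2 by simp
        moreover have "tgen e n 0 \<in> gens e n" using e unfolding gens_def by blast
        ultimately show False using nd step_t[OF g e n uv(1,2,3) uv1, of 0] by blast
      qed
      thus "u < v \<and> a v = 1" using uv2 by simp
    qed
  next
    case (Suc m)
    show ?case
    proof (intro allI impI)
      fix u v assume uv: "u < n" "v < n" "\<sigma> u = Suc m" "\<sigma> v = Suc (Suc m)"
      obtain w where w: "w < n" "\<sigma> w = m" using goodrep_ex[OF g, of m] Suc.prems by auto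
      have au: "a u = 1" using Suc.IH Suc.prems w uv by auto
      have c: "1 \<le> Suc m" "Suc (Suc m) < n" using Suc.prems by auto
      have sg: "sgen n (Suc m + 2) \<in> gens e n" unfolding gens_def using c by fastforce
      have ne: "u \<noteq> v" using uv by auto
      have "\<not> v < u"
      proof
        assume vu: "v < u"
        hence "Fp n (Transposition.transpose (Suc m) (Suc (Suc m)) \<circ> \<sigma>) a < Fp n \<sigma> a"
          using step_s[OF g c uv] au by simp
        thus False using nd step_s[OF g c uv] sg by blast
      qed
      hence uv2: "u < v" using ne by arith
      have "a v = 1"
      proof (rule ccontr)
        assume "a v \<noteq> 1"
        hence "Fp n (Transposition.transpose (Suc m) (Suc (Suc m)) \<circ> \<sigma>) a < Fp n \<sigma> a"
          using step_s[OF g c uv] uv2 by simp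
        thus False using nd step_s[OF g c uv] sg by blast
      qed
      thus "u < v \<and> a v = 1" using uv2 by simp
    qed
  qed
  have chain: "\<forall>u v. u < n \<longrightarrow> v < n \<longrightarrow> \<sigma> v = \<sigma> u + Suc d \<longrightarrow> u < v" for d
  proof (induction d)
    case 0
    show ?case
    proof (intro allI impI)
      fix u v assume uv: "u < n" "v < n" "\<sigma> v = \<sigma> u + Suc 0"
      have "Suc (\<sigma> u) < n" using uv s by auto
      from P[OF this, rule_format, OF uv(1,2) refl] uv(3) show "u < v" by simp
    qed
  next
    case (Suc d)
    show ?case
    proof (intro allI impI)
      fix u v assume uv: "u < n" "v < n" "\<sigma> v = \<sigma> u + Suc (Suc d)"
      have "\<sigma> u + Suc d < n" using uv s by auto
      then obtain w where w: "w < n" "\<sigma> w = \<sigma> u + Suc d" using goodrep_ex[OF g] by blast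
      have "u < w" using Suc.IH uv w by blast
      moreover have "w < v"
      proof -
        have e1: "Suc (\<sigma> w) = \<sigma> v" using uv(3) w(2) by simp
        have "\<sigma> v < n" using s uv(2) by blast
        hence "Suc (\<sigma> w) < n" using e1 by simp
        from P[OF this, rule_format, OF w(1) uv(2) refl e1[symmetric]] show "w < v" by simp
      qed
      ultimately show "u < v" by simp
    qed
  qed
  have mono: "\<forall>j i. j < i \<longrightarrow> i < n \<longrightarrow> \<sigma> j < \<sigma> i"
  proof (intro allI impI)
    fix j i assume ji: "j < i" "i < n"
    show "\<sigma> j < \<sigma> i"
    proof (rule ccontr)
      assume "\<not> \<sigma> j < \<sigma> i"
      moreover have "\<sigma> j \<noteq> \<sigma> i" using inj ji by (auto simp: inj_on_def)
      ultimately have "\<sigma> j = \<sigma> i + Suc (\<sigma> j - \<sigma> i - 1)" by arith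
      hence "i < j" using chain[of "\<sigma> j - \<sigma> i - 1", rule_format, of i j] ji by simp
      thus False using ji by simp
    qed
  qed
  have sid: "\<sigma> i = i" if "i < n" for i using incr_id[OF s mono that] .
  have a1: "a i = 1" if "1 \<le> i" "i < n" for i
  proof -
    have "Suc (i - 1) < n" using that by simp
    from P[OF this, rule_format, of "i - 1" i] that sid[of "i - 1"] sid[of i] show ?thesis by simp
  qed
  have "Fp n \<sigma> a = 0"
    unfolding Fp_def
  proof (rule sum.neutral, rule ballI)
    fix p assume p: "p \<in> Pairs n"
    obtain j i where ji: "p = (j, i)" "j < i" "i < n" using p by (auto simp: Pairs_def)
    show "Hc \<sigma> a p = 0" using ji sid[of i] sid[of j] a1[of i] by (simp add: Hc_def)
  qed
  thus False using f by simp
qed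

lemma upper:
  assumes e: "e > 0" and n: "n \<ge> 2"
  shows "goodrep e n \<sigma> a \<Longrightarrow> \<exists>ws. set ws \<subseteq> gens e n \<and> length ws \<le> Fp n \<sigma> a \<and> word_prod n ws = mmat n \<sigma> a"
proof (induction "Fp n \<sigma> a" arbitrary: \<sigma> a rule: less_induct)
  case less
  show ?case
  proof (cases "Fp n \<sigma> a = 0")
    case True
    have "word_prod n [] = mmat n \<sigma> a" using Fp0[OF less.prems _ True] n by (simp add: word_prod_def)
    thus ?thesis by (intro exI[of _ "[]"]) simp
  next
    case False
    then obtain x \<sigma>' a' where d: "x \<in> gens e n" "goodrep e n \<sigma>' a'" "mmat n \<sigma>' a' * x = mmat n \<sigma> a"
      "Fp n \<sigma>' a' < Fp n \<sigma> a" using descent[OF less.prems e n] by auto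
    obtain ws where ws: "set ws \<subseteq> gens e n" "length ws \<le> Fp n \<sigma>' a'" "word_prod n ws = mmat n \<sigma>' a'"
      using less.hyps[OF d(4) d(2)] by blast
    have "word_prod n (ws @ [x]) = word_prod n ws * x"
      using ws(1) d(1) gens_carrier by (intro wp_snoc) auto
    hence "word_prod n (ws @ [x]) = mmat n \<sigma> a" using ws(3) d(3) by simp
    moreover have "length (ws @ [x]) \<le> Fp n \<sigma> a" using ws(2) d(4) by simp
    moreover have "set (ws @ [x]) \<subseteq> gens e n" using ws(1) d(1) by simp
    ultimately show ?thesis by blast
  qed
qed

lemma wlen_eq:
  assumes g: "goodrep e n \<sigma> a" and e: "e > 0" and n: "n \<ge> 2"
  shows "wlen e n (mmat n \<sigma> a) = Fp n \<sigma> a"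
proof -
  let ?P = "\<lambda>k. \<exists>ws. set ws \<subseteq> gens e n \<and> length ws = k \<and> word_prod n ws = mmat n \<sigma> a"
  obtain ws where ws: "set ws \<subseteq> gens e n" "length ws \<le> Fp n \<sigma> a" "word_prod n ws = mmat n \<sigma> a"
    using upper[OF e n g] by blast
  have Pw: "?P (length ws)" using ws by blast
  have le: "wlen e n (mmat n \<sigma> a) \<le> Fp n \<sigma> a"
    unfolding wlen_def using Least_le[of ?P, OF Pw] ws(2) by linarith
  have "?P (wlen e n (mmat n \<sigma> a))" unfolding wlen_def by (rule LeastI[of ?P, OF Pw])
  then obtain vs where vs: "set vs \<subseteq> gens e n" "length vs = wlen e n (mmat n \<sigma> a)" "word_prod n vs = mmat n \<sigma> a"
    by blast
  obtain \<sigma>' a' where sa: "goodrep e n \<sigma>' a'" "word_prod n vs = mmat n \<sigma>' a'" "Fp n \<sigma>' a' \<le> length vs"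
    using lower[OF e n vs(1)] by blast
  have s: "\<forall>i<n. \<sigma> i < n" using g unfolding goodrep_def by auto
  have nz: "\<forall>i<n. a i \<noteq> 0" using goodrep_nz[OF g e] by auto
  have "Fp n \<sigma> a = Fp n \<sigma>' a'"
    using mmat_inj[of n \<sigma> a \<sigma>' a'] vs(3) sa(2) s nz by (intro Fp_cong) auto
  thus ?thesis using le sa(3) vs(2) by linarith
qed

lemma Pairs_Suc: "Pairs (Suc n) = Pairs n \<union> (\<lambda>j. (j, n)) ` {..<n}"
  by (auto simp: Pairs_def)

lemma card_Pairs: "2 * card (Pairs n) = n * (n - 1)"
proof (induction n)
  case 0
  show ?case by (simp add: Pairs_def)
next
  case (Suc n)
  have d: "Pairs n \<inter> (\<lambda>j. (j, n)) ` {..<n} = {}" by (auto simp: Pairs_def)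
  have "card (Pairs (Suc n)) = card (Pairs n) + card ((\<lambda>j. (j, n)) ` {..<n})"
    unfolding Pairs_Suc by (rule card_Un_disjoint) (use d in auto)
  also have "card ((\<lambda>j. (j, n)) ` {..<n}) = n" by (subst card_image) (auto simp: inj_on_def)
  finally have "2 * card (Pairs (Suc n)) = n * (n - 1) + 2 * n" using Suc.IH by simp
  also have "\<dots> = Suc n * (Suc n - 1)" by (cases n) (simp_all add: algebra_simps)
  finally show ?case .
qed

lemma Hc_le: "Hc \<sigma> a p \<le> 2"
  by (simp add: Hc_def)

lemma Fp_le: "Fp n \<sigma> a \<le> n * (n - 1)"
proof -
  have "Fp n \<sigma> a \<le> sum (\<lambda>_. 2) (Pairs n)" unfolding Fp_def by (rule sum_mono) (rule Hc_le)
  also have "\<dots> = n * (n - 1)" using card_Pairs[of n] by simp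
  finally show ?thesis .
qed

lemma Fp_max: "Fp n \<sigma> a = n * (n - 1) \<longleftrightarrow> (\<forall>j i. j < i \<longrightarrow> i < n \<longrightarrow> \<sigma> j < \<sigma> i \<and> a i \<noteq> 1)"
proof
  assume f: "Fp n \<sigma> a = n * (n - 1)"
  show "\<forall>j i. j < i \<longrightarrow> i < n \<longrightarrow> \<sigma> j < \<sigma> i \<and> a i \<noteq> 1"
  proof (rule ccontr)
    assume "\<not> ?thesis"
    then obtain j i where ji: "j < i" "i < n" "\<not> (\<sigma> j < \<sigma> i \<and> a i \<noteq> 1)" by blast
    have "Fp n \<sigma> a < sum (\<lambda>_. 2) (Pairs n)" unfolding Fp_def
    proof (rule sum_strict_mono_ex1)
      show "\<forall>x\<in>Pairs n. Hc \<sigma> a x \<le> 2" using Hc_le by blast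
      show "\<exists>x\<in>Pairs n. Hc \<sigma> a x < 2"
        using ji by (intro bexI[of _ "(j, i)"]) (auto simp: Hc_def Pairs_def)
    qed simp
    also have "\<dots> = n * (n - 1)" using card_Pairs[of n] by simp
    finally show False using f by simp
  qed
next
  assume h: "\<forall>j i. j < i \<longrightarrow> i < n \<longrightarrow> \<sigma> j < \<sigma> i \<and> a i \<noteq> 1"
  have "Fp n \<sigma> a = sum (\<lambda>_. 2) (Pairs n)" unfolding Fp_def
    by (rule sum.cong) (use h in \<open>auto simp: Hc_def Pairs_def\<close>)
  also have "\<dots> = n * (n - 1)" using card_Pairs[of n] by simp
  finally show "Fp n \<sigma> a = n * (n - 1)" .
qed

lemma max_char:
  assumes g: "goodrep e n \<sigma> a" and e: "e > 0" and n: "n \<ge> 2"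
  shows "(\<forall>j i. j < i \<longrightarrow> i < n \<longrightarrow> \<sigma> j < \<sigma> i \<and> a i \<noteq> 1)
    \<longleftrightarrow> (diagonal n (mmat n \<sigma> a) \<and> (\<forall>i\<in>{2..n}. entry (mmat n \<sigma> a) i i \<noteq> 1))"
proof
  have s: "\<forall>i<n. \<sigma> i < n" using g unfolding goodrep_def by auto
  assume h: "\<forall>j i. j < i \<longrightarrow> i < n \<longrightarrow> \<sigma> j < \<sigma> i \<and> a i \<noteq> 1"
  have sid: "\<sigma> i = i" if "i < n" for i using incr_id[OF s _ that] h by blast
  have "diagonal n (mmat n \<sigma> a)" unfolding diagonal_def using sid by auto
  moreover have "entry (mmat n \<sigma> a) i i \<noteq> 1" if i: "i \<in> {2..n}" for i
  proof -
    have "i - 1 < n" "0 < i - 1" using i by auto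
    moreover have "a (i - 1) \<noteq> 1" using h \<open>i - 1 < n\<close> \<open>0 < i - 1\<close> by blast
    ultimately show ?thesis using sid unfolding entry_def by auto
  qed
  ultimately show "diagonal n (mmat n \<sigma> a) \<and> (\<forall>i\<in>{2..n}. entry (mmat n \<sigma> a) i i \<noteq> 1)" by blast
next
  have s: "\<forall>i<n. \<sigma> i < n" using g unfolding goodrep_def by auto
  have nz: "a i \<noteq> 0" if "i < n" for i using goodrep_nz[OF g e that] .
  assume h: "diagonal n (mmat n \<sigma> a) \<and> (\<forall>i\<in>{2..n}. entry (mmat n \<sigma> a) i i \<noteq> 1)"
  have sid: "\<sigma> i = i" if i: "i < n" for i
  proof (rule ccontr)
    assume "\<sigma> i \<noteq> i"
    moreover have d: "\<forall>i<n. \<forall>j<n. i \<noteq> j \<longrightarrow> mmat n \<sigma> a $$ (i, j) = 0"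
      using h unfolding diagonal_def by blast
    moreover have si: "\<sigma> i < n" using s i by blast
    ultimately have "mmat n \<sigma> a $$ (i, \<sigma> i) = 0" using i by metis
    thus False using nz[OF i] s i by simp
  qed
  have ai: "a i \<noteq> 1" if "1 \<le> i" "i < n" for i
  proof -
    have "Suc i \<in> {2..n}" using that by auto
    hence "entry (mmat n \<sigma> a) (Suc i) (Suc i) \<noteq> 1" using h by blast
    thus ?thesis using that sid unfolding entry_def by simp
  qed
  show "\<forall>j i. j < i \<longrightarrow> i < n \<longrightarrow> \<sigma> j < \<sigma> i \<and> a i \<noteq> 1"
    using sid ai by auto
qed

definition Dg :: "nat \<Rightarrow> nat \<Rightarrow> nat \<Rightarrow> nat \<Rightarrow> complex" where
  "Dg e i m r = (if r = 0 then inverse (zeta e ^ m) else if r = i - 1 then zeta e ^ m else 1)"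

definition bl :: "nat \<Rightarrow> nat \<Rightarrow> nat \<Rightarrow> nat \<Rightarrow> complex mat list" where
  "bl e n i m = map (sgen n) (rev [3..<i+1]) @ [tgen e n m, tgen e n 0] @ map (sgen n) [3..<i+1]"

lemma block_bl: "block e n k i = bl e n i (k i)"
  by (simp add: block_def bl_def)

lemma bl_carrier: "set (bl e n i m) \<subseteq> carrier_mat n n"
  by (auto simp: bl_def sgen_mmat tgen_mmat)

lemma bl_prod_aux:
  assumes n: "n \<ge> 2"
  shows "d + 2 \<le> n \<Longrightarrow> word_prod n (bl e n (d + 2) m) = mmat n id (Dg e (d + 2) m)"
proof (induction d)
  case 0
  have "word_prod n (bl e n (0 + 2) m) = tgen e n m * tgen e n 0"
    by (simp add: bl_def word_prod_def tgen_mmat)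
  also have "\<dots> = mmat n (Transposition.transpose 0 1 \<circ> Transposition.transpose 0 1)
      (\<lambda>r. tb e m r * tb e 0 (Transposition.transpose 0 1 r))"
    unfolding tgen_mmat using n by (intro mmat_mult) (auto simp: transpose_def)
  also have "\<dots> = mmat n id (Dg e (0 + 2) m)"
    by (rule mmat_cong) (auto simp: transpose_def tb_def Dg_def)
  finally show ?case .
next
  case (Suc d)
  define \<tau> where "\<tau> = Transposition.transpose (Suc d) (Suc (Suc d))"
  have s: "sgen n (Suc d + 2) = mmat n \<tau> (\<lambda>_. 1)" unfolding sgen_mmat \<tau>_def by simp
  have L: "bl e n (Suc d + 2) m = sgen n (Suc d + 2) # (bl e n (d + 2) m @ [sgen n (Suc d + 2)])"
    by (simp add: bl_def)
  have sc: "sgen n (Suc d + 2) \<in> carrier_mat n n" by (simp add: sgen_mmat)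
  have "word_prod n (bl e n (Suc d + 2) m) = sgen n (Suc d + 2) * (word_prod n (bl e n (d + 2) m) * sgen n (Suc d + 2))"
    unfolding L using wp_snoc[OF bl_carrier sc] by (simp add: word_prod_def)
  also have "\<dots> = mmat n \<tau> (\<lambda>_. 1) * (mmat n id (Dg e (d + 2) m) * mmat n \<tau> (\<lambda>_. 1))"
  proof -
    have IH: "word_prod n (bl e n (d + 2) m) = mmat n id (Dg e (d + 2) m)"
      by (rule Suc.IH) (use Suc.prems in simp)
    show ?thesis by (simp only: IH s)
  qed
  also have "mmat n id (Dg e (d + 2) m) * mmat n \<tau> (\<lambda>_. 1) = mmat n (\<tau> \<circ> id) (\<lambda>r. Dg e (d + 2) m r * 1)"
    by (intro mmat_mult) simp
  also have "mmat n \<tau> (\<lambda>_. 1) * mmat n (\<tau> \<circ> id) (\<lambda>r. Dg e (d + 2) m r * 1)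
      = mmat n ((\<tau> \<circ> id) \<circ> \<tau>) (\<lambda>r. 1 * (Dg e (d + 2) m (\<tau> r) * 1))"
    using Suc.prems by (intro mmat_mult) (auto simp: \<tau>_def transpose_def)
  also have "\<dots> = mmat n id (Dg e (Suc d + 2) m)"
    by (rule mmat_cong) (auto simp: \<tau>_def transpose_def Dg_def)
  finally show ?case .
qed

lemma bl_prod:
  assumes "n \<ge> 2" "2 \<le> i" "i \<le> n"
  shows "word_prod n (bl e n i m) = mmat n id (Dg e i m)"
proof -
  obtain d where d: "i = d + 2" using assms(2) by (metis add.commute le_add_diff_inverse)
  show ?thesis using bl_prod_aux[OF assms(1), of d e m] assms unfolding d by simp
qed

definition Eg :: "nat \<Rightarrow> (nat \<Rightarrow> nat) \<Rightarrow> nat \<Rightarrow> nat \<Rightarrow> complex" where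
  "Eg e k m r = (if r = 0 then inverse (\<Prod>i\<in>{2..m}. zeta e ^ k i) else if r < m then zeta e ^ k (Suc r) else 1)"

lemma blocks_carrier: "set (concat (map (block e n k) xs)) \<subseteq> carrier_mat n n"
proof
  fix x assume "x \<in> set (concat (map (block e n k) xs))"
  then obtain i where "x \<in> set (block e n k i)" by auto
  thus "x \<in> carrier_mat n n" using bl_carrier[of e n i "k i"] unfolding block_bl by blast
qed

lemma mw_prod:
  assumes n: "n \<ge> 2"
  shows "1 \<le> m \<Longrightarrow> m \<le> n \<Longrightarrow> word_prod n (concat (map (block e n k) [2..<Suc m])) = mmat n id (Eg e k m)"
proof (induction m)
  case 0
  thus ?case by simp
next
  case (Suc m)
  show ?case
  proof (cases "m = 0")
    case True
    have "word_prod n (concat (map (block e n k) [2..<Suc (Suc m)])) = mmat n id (\<lambda>_. 1)"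
      using True by (simp add: word_prod_def one_mmat)
    also have "\<dots> = mmat n id (Eg e k (Suc m))"
      using True by (intro mmat_cong) (auto simp: Eg_def)
    finally show ?thesis .
  next
    case False
    have IH: "word_prod n (concat (map (block e n k) [2..<Suc m])) = mmat n id (Eg e k m)"
      by (rule Suc.IH) (use Suc.prems False in auto)
    have "word_prod n (concat (map (block e n k) [2..<Suc (Suc m)]))
        = word_prod n (concat (map (block e n k) [2..<Suc m]) @ block e n k (Suc m))"
      using False by (simp only: upt_Suc_append[of 2 "Suc m"]) simp
    also have "\<dots> = word_prod n (concat (map (block e n k) [2..<Suc m])) * word_prod n (block e n k (Suc m))"
      by (rule wp_append[OF blocks_carrier]) (simp add: block_bl bl_carrier)
    also have "\<dots> = mmat n id (Eg e k m) * mmat n id (Dg e (Suc m) (k (Suc m)))"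
      using IH bl_prod[OF n, of "Suc m" e "k (Suc m)"] Suc.prems False by (simp add: block_bl)
    also have "\<dots> = mmat n (id \<circ> id) (\<lambda>r. Eg e k m r * Dg e (Suc m) (k (Suc m)) (id r))"
      by (intro mmat_mult) simp
    also have "\<dots> = mmat n id (Eg e k (Suc m))"
    proof (rule mmat_cong)
      fix r assume r: "r < n"
      have p: "(\<Prod>i\<in>{2..Suc m}. zeta e ^ k i) = (\<Prod>i\<in>{2..m}. zeta e ^ k i) * zeta e ^ k (Suc m)"
        using False by simp
      show "(id \<circ> id) r = id r \<and> Eg e k m r * Dg e (Suc m) (k (Suc m)) (id r) = Eg e k (Suc m) r"
        using False p by (auto simp: Eg_def Dg_def)
    qed
    finally show ?thesis .
  qed
qed

lemma mw_len: "1 \<le> m \<Longrightarrow> length (concat (map (block e n k) [2..<Suc m])) = m * (m - 1)"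
proof (induction m)
  case 0
  thus ?case by simp
next
  case (Suc m)
  show ?case
  proof (cases "m = 0")
    case True
    thus ?thesis by simp
  next
    case False
    have A: "length (concat (map (block e n k) [2..<Suc (Suc m)]))
        = length (concat (map (block e n k) [2..<Suc m])) + length (block e n k (Suc m))"
      using False by (simp only: upt_Suc_append[of 2 "Suc m"]) simp
    have B: "length (concat (map (block e n k) [2..<Suc m])) = m * (m - 1)"
      by (rule Suc.IH) (use False in auto)
    have C: "length (block e n k (Suc m)) = 2 * (Suc m - 2) + 2"
      using False by (simp add: block_def del: upt_Suc)
    show ?thesis unfolding A B C using False by (cases m) (simp_all add: algebra_simps)
  qed
qed

lemma prod_split0: "(n::nat) \<ge> 1 \<Longrightarrow> (\<Prod>i<n. f i) = (f 0 :: complex) * (\<Prod>i\<in>{1..<n}. f i)"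
proof -
  assume n: "n \<ge> 1"
  have "{..<n} = insert 0 {1..<n}" using n by auto
  thus ?thesis by simp
qed

lemma count_max:
  assumes e: "e \<ge> 2" and n: "n \<ge> 2"
  shows "card {w \<in> Geen e n. wlen e n w = n * (n - 1)} = (e - 1) ^ (n - 1)"
proof -
  have e0: "e > 0" using e by simp
  define R where "R = {z::complex. z ^ e = 1} - {1}"
  have fin: "finite {z::complex. z ^ e = 1}" using e0 by (intro finite_roots_unity) simp
  have cR: "card R = e - 1"
    unfolding R_def using card_roots_unity_eq[OF e0] fin by (subst card_Diff_singleton) auto
  define \<Phi> where "\<Phi> c = mmat n id (\<lambda>i. if i = 0 then inverse (\<Prod>j\<in>{1..<n}. c j) else c i)" for c :: "nat \<Rightarrow> complex"
  define P where "P = PiE {1..<n} (\<lambda>_. R)"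
  have Pp: "c i ^ e = 1 \<and> c i \<noteq> 1" if "c \<in> P" "i \<in> {1..<n}" for c i
    using that unfolding P_def R_def by (auto simp: PiE_iff)
  have inP: "\<Phi> c \<in> Geen e n \<and> wlen e n (\<Phi> c) = n * (n - 1)" if c: "c \<in> P" for c
  proof -
    define a where "a i = (if i = 0 then inverse (\<Prod>j\<in>{1..<n}. c j) else c i)" for i
    have Pc: "(\<Prod>j\<in>{1..<n}. c j) ^ e = 1" using Pp[OF c] by (simp add: prod_power_distrib)
    hence Pnz: "(\<Prod>j\<in>{1..<n}. c j) \<noteq> 0" using e0 by (metis zero_neq_one zero_power)
    have g: "goodrep e n id a" unfolding goodrep_def
    proof (intro conjI)
      show "\<forall>i<n. a i ^ e = 1"
      proof (intro allI impI)
        fix i assume i: "i < n"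
        show "a i ^ e = 1"
        proof (cases "i = 0")
          case True thus ?thesis using Pc by (simp add: a_def power_inverse)
        next
          case False thus ?thesis using Pp[OF c, of i] i by (simp add: a_def)
        qed
      qed
      have "(\<Prod>i<n. a i) = a 0 * (\<Prod>i\<in>{1..<n}. a i)" using n by (intro prod_split0) simp
      also have "(\<Prod>i\<in>{1..<n}. a i) = (\<Prod>i\<in>{1..<n}. c i)" by (rule prod.cong) (auto simp: a_def)
      finally show "(\<Prod>i<n. a i) = 1" using Pnz by (simp add: a_def)
    qed auto
    have eq: "\<Phi> c = mmat n id a" unfolding \<Phi>_def a_def ..
    have "wlen e n (\<Phi> c) = Fp n id a" unfolding eq by (rule wlen_eq[OF g e0 n])
    also have "\<dots> = n * (n - 1)"
      unfolding Fp_max using Pp[OF c] by (auto simp: a_def)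
    finally show ?thesis using rep_G[OF g e0] eq by simp
  qed
  have sub: "{w \<in> Geen e n. wlen e n w = n * (n - 1)} \<subseteq> \<Phi> ` P"
  proof
    fix w assume w: "w \<in> {w \<in> Geen e n. wlen e n w = n * (n - 1)}"
    obtain \<sigma> a where g: "goodrep e n \<sigma> a" and weq: "w = mmat n \<sigma> a" using G_rep w by blast
    have s: "\<forall>i<n. \<sigma> i < n" and p: "(\<Prod>i<n. a i) = 1" using g unfolding goodrep_def by auto
    have r: "\<forall>i<n. a i ^ e = 1" using g unfolding goodrep_def by auto
    have "Fp n \<sigma> a = n * (n - 1)" using w wlen_eq[OF g e0 n] weq by simp
    hence h: "\<forall>j i. j < i \<longrightarrow> i < n \<longrightarrow> \<sigma> j < \<sigma> i \<and> a i \<noteq> 1" using Fp_max by blast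
    have sid: "\<sigma> i = i" if "i < n" for i using incr_id[OF s _ that] h by blast
    define c where "c = restrict a {1..<n}"
    have ne1: "a i \<noteq> 1" if "1 \<le> i" "i < n" for i using h[rule_format, of 0 i] that by simp
    have cP: "c \<in> P" unfolding P_def R_def c_def using ne1 r by auto
    have "(\<Prod>i<n. a i) = a 0 * (\<Prod>i\<in>{1..<n}. a i)" using n by (intro prod_split0) simp
    hence a0: "inverse (\<Prod>i\<in>{1..<n}. a i) = a 0" using p by (intro inverse_unique) (simp add: mult.commute)
    have "\<Phi> c = mmat n \<sigma> a" unfolding \<Phi>_def
    proof (rule mmat_cong)
      fix i assume i: "i < n"
      have "(\<Prod>j\<in>{1..<n}. c j) = (\<Prod>j\<in>{1..<n}. a j)" by (rule prod.cong) (auto simp: c_def)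
      thus "id i = \<sigma> i \<and> (if i = 0 then inverse (\<Prod>j\<in>{1..<n}. c j) else c i) = a i"
        using sid[OF i] a0 i by (auto simp: c_def)
    qed
    hence "w = \<Phi> c" using weq by simp
    thus "w \<in> \<Phi> ` P" using cP by (rule image_eqI)
  qed
  have eqS: "{w \<in> Geen e n. wlen e n w = n * (n - 1)} = \<Phi> ` P"
    using sub inP by blast
  have inj: "inj_on \<Phi> P"
  proof (rule inj_onI)
    fix c c' assume c: "c \<in> P" "c' \<in> P" "\<Phi> c = \<Phi> c'"
    show "c = c'"
    proof (rule PiE_ext[OF c(1)[unfolded P_def] c(2)[unfolded P_def]])
      fix i assume i: "i \<in> {1..<n}"
      have "\<Phi> c $$ (i, i) = \<Phi> c' $$ (i, i)" using c(3) by simp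
      thus "c i = c' i" using i unfolding \<Phi>_def by simp
    qed
  qed
  have "card {w \<in> Geen e n. wlen e n w = n * (n - 1)} = card P"
    unfolding eqS using inj by (rule card_image)
  also have "\<dots> = (\<Prod>i\<in>{1..<n}. card R)" unfolding P_def by (rule card_PiE) simp
  also have "\<dots> = (e - 1) ^ (n - 1)" using cR by simp
  finally show ?thesis .
qed

theorem mainTheorem4:
  fixes e n :: nat
  assumes "e \<ge> 2" and "n \<ge> 2"
  shows "(\<forall>w\<in>Geen e n. wlen e n w \<le> n * (n - 1))
    \<and> (\<exists>w\<in>Geen e n. wlen e n w = n * (n - 1))
    \<and> (\<forall>w\<in>Geen e n. wlen e n w = n * (n - 1) \<longleftrightarrow>
          (diagonal n w \<and> (\<forall>i\<in>{2..n}. entry w i i \<noteq> 1)))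
    \<and> (\<forall>w\<in>Geen e n. \<forall>k. diagonal n w \<and> (\<forall>i\<in>{2..n}. entry w i i \<noteq> 1)
          \<and> (\<forall>i\<in>{2..n}. 1 \<le> k i \<and> k i \<le> e - 1 \<and> entry w i i = zeta e ^ k i)
          \<longrightarrow> word_prod n (max_word e n k) = w
              \<and> length (max_word e n k) = wlen e n w)
    \<and> card {w\<in>Geen e n. wlen e n w = n * (n - 1)} = (e - 1) ^ (n - 1)"
proof -
  have e0: "e > 0" using assms(1) by simp
  have n: "n \<ge> 2" using assms(2) .
  have c1: "\<forall>w\<in>Geen e n. wlen e n w \<le> n * (n - 1)"
  proof
    fix w assume w: "w \<in> Geen e n"
    obtain \<sigma> a where g: "goodrep e n \<sigma> a" and weq: "w = mmat n \<sigma> a" using G_rep[OF w] by blast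
    show "wlen e n w \<le> n * (n - 1)" unfolding weq wlen_eq[OF g e0 n] by (rule Fp_le)
  qed
  have c3: "\<forall>w\<in>Geen e n. wlen e n w = n * (n - 1) \<longleftrightarrow>
          (diagonal n w \<and> (\<forall>i\<in>{2..n}. entry w i i \<noteq> 1))"
  proof
    fix w assume w: "w \<in> Geen e n"
    obtain \<sigma> a where g: "goodrep e n \<sigma> a" and weq: "w = mmat n \<sigma> a" using G_rep[OF w] by blast
    show "wlen e n w = n * (n - 1) \<longleftrightarrow> (diagonal n w \<and> (\<forall>i\<in>{2..n}. entry w i i \<noteq> 1))"
      unfolding weq wlen_eq[OF g e0 n] Fp_max using max_char[OF g e0 n] .
  qed
  have c5: "card {w\<in>Geen e n. wlen e n w = n * (n - 1)} = (e - 1) ^ (n - 1)"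
    by (rule count_max[OF assms])
  have c2: "\<exists>w\<in>Geen e n. wlen e n w = n * (n - 1)"
  proof (rule ccontr)
    assume "\<not> ?thesis"
    hence emp: "{w\<in>Geen e n. wlen e n w = n * (n - 1)} = {}" by blast
    have "(e - 1) ^ (n - 1) = 0" unfolding c5[symmetric] emp by (rule card.empty)
    thus False using assms(1) by simp
  qed
  have c4: "\<forall>w\<in>Geen e n. \<forall>k. diagonal n w \<and> (\<forall>i\<in>{2..n}. entry w i i \<noteq> 1)
          \<and> (\<forall>i\<in>{2..n}. 1 \<le> k i \<and> k i \<le> e - 1 \<and> entry w i i = zeta e ^ k i)
          \<longrightarrow> word_prod n (max_word e n k) = w
              \<and> length (max_word e n k) = wlen e n w"
  proof (intro ballI allI impI)
    fix w k assume w: "w \<in> Geen e n"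
      and h: "diagonal n w \<and> (\<forall>i\<in>{2..n}. entry w i i \<noteq> 1)
          \<and> (\<forall>i\<in>{2..n}. 1 \<le> k i \<and> k i \<le> e - 1 \<and> entry w i i = zeta e ^ k i)"
    obtain \<sigma> a where g: "goodrep e n \<sigma> a" and weq: "w = mmat n \<sigma> a" using G_rep[OF w] by blast
    have s: "\<forall>i<n. \<sigma> i < n" and p: "(\<Prod>i<n. a i) = 1" using g unfolding goodrep_def by auto
    have hh: "\<forall>j i. j < i \<longrightarrow> i < n \<longrightarrow> \<sigma> j < \<sigma> i \<and> a i \<noteq> 1"
      using max_char[OF g e0 n] h weq by blast
    have sid: "\<sigma> i = i" if "i < n" for i using incr_id[OF s _ that] hh by blast
    have ar: "a r = zeta e ^ k (Suc r)" if r: "1 \<le> r" "r < n" for r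
    proof -
      have "Suc r \<in> {2..n}" using r by auto
      hence "entry w (Suc r) (Suc r) = zeta e ^ k (Suc r)" using h by blast
      thus ?thesis using sid[OF r(2)] r unfolding weq entry_def by simp
    qed
    have "(\<Prod>i<n. a i) = a 0 * (\<Prod>i\<in>{1..<n}. a i)" using n by (intro prod_split0) simp
    hence a0: "inverse (\<Prod>i\<in>{1..<n}. a i) = a 0" using p by (intro inverse_unique) (simp add: mult.commute)
    have pr: "(\<Prod>i\<in>{1..<n}. a i) = (\<Prod>i\<in>{2..n}. zeta e ^ k i)"
    proof -
      have "(\<Prod>i\<in>{1..<n}. a i) = (\<Prod>i\<in>{1..<n}. zeta e ^ k (Suc i))"
        using ar by (intro prod.cong) auto
      also have "\<dots> = (\<Prod>i\<in>{Suc 1..<Suc n}. zeta e ^ k i)"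
        by (rule prod.shift_bounds_Suc_ivl[symmetric])
      also have "{Suc 1..<Suc n} = {2..n}" by auto
      finally show ?thesis .
    qed
    have mw: "max_word e n k = concat (map (block e n k) [2..<Suc n])" by (simp add: max_word_def)
    have "word_prod n (max_word e n k) = mmat n id (Eg e k n)"
      unfolding mw using n by (intro mw_prod) auto
    also have "\<dots> = w" unfolding weq
    proof (rule mmat_cong)
      fix r assume r: "r < n"
      show "id r = \<sigma> r \<and> Eg e k n r = a r"
      proof (cases "r = 0")
        case True thus ?thesis using a0 pr sid r by (simp add: Eg_def)
      next
        case False thus ?thesis using ar[of r] sid r by (simp add: Eg_def)
      qed
    qed
    finally have P1: "word_prod n (max_word e n k) = w" .
    have "length (max_word e n k) = n * (n - 1)" unfolding mw using n by (intro mw_len) auto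
    also have "\<dots> = wlen e n w" using c3 w h by auto
    finally show "word_prod n (max_word e n k) = w \<and> length (max_word e n k) = wlen e n w"
      using P1 by simp
  qed
  show ?thesis using c1 c2 c3 c4 c5 by blast
qed

end
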